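(* Let $\mathbf u$ be an infinite word over a finite alphabet whose language is closed under reversal. Suppose that both the defect $D(\mathbf u)$ and the sum $\sum_{n=0}^{+\infty}T_{\mathbf u}(n)$ are finite. Then $$2D(\mathbf u)=\sum_{n=0}^{+\infty}T_{\mathbf u}(n).$$
   Context: For a finite word $w=w_0\cdots w_{n-1}$ its reversal is $\overline{w}=w_{n-1}\cdots w_0$; $w$ is a palindrome if $w=\overline{w}$ (the empty word is a palindrome). The language $\mathcal L(\mathbf u)$ is the set of all finite factors of $\mathbf u$, and $\mathcal L_n(\mathbf u)$ those of length $n$; the language is closed under reversal if $w\in\mathcal L(\mathbf u)$ implies $\overline w\in\mathcal L(\mathbf u)$. The factor complexity is $\mathcal C_{\mathbf u}(n)=\#\mathcal L_n(\mathbf u)$ and the palindromic complexity $\mathcal P_{\mathbf u}(n)$ is the number of palindromes in $\mathcal L_n(\mathbf u)$. Define $T_{\mathbf u}(n)=\mathcal C_{\mathbf u}(n+1)-\mathcal C_{\mathbf u}(n)+2-\mathcal P_{\mathbf u}(n+1)-\mathcal P_{\mathbf u}(n)$. The defect of a finite word $w$ is $D(w)=|w|+1-(\text{number of distinct palindromic factors of } w, \text{ including the empty word})$. The defect of an infinite word is $D(\mathbf u)=\sup\{D(w): w \text{ a prefix of } \mathbf u\}$ (possibly $+\infty$). *)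

theory Defs
  imports Complex_Main "HOL-Library.Extended_Nat"
begin

definition factor_of :: "(nat \<Rightarrow> 'a) \<Rightarrow> nat \<Rightarrow> nat \<Rightarrow> 'a list" where
  "factor_of u i n = map u [i..<i+n]"

definition lang :: "(nat \<Rightarrow> 'a) \<Rightarrow> 'a list set" where
  "lang u = {w. \<exists>i. w = factor_of u i (length w)}"

definition lang_n :: "(nat \<Rightarrow> 'a) \<Rightarrow> nat \<Rightarrow> 'a list set" where
  "lang_n u n = {w \<in> lang u. length w = n}"

definition closed_under_reversal :: "(nat \<Rightarrow> 'a) \<Rightarrow> bool" where
  "closed_under_reversal u \<longleftrightarrow> (\<forall>w \<in> lang u. rev w \<in> lang u)"

definition is_palindrome :: "'a list \<Rightarrow> bool" where
  "is_palindrome w \<longleftrightarrow> rev w = w"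

definition factor_complexity :: "(nat \<Rightarrow> 'a) \<Rightarrow> nat \<Rightarrow> nat" where
  "factor_complexity u n = card (lang_n u n)"

definition pal_complexity :: "(nat \<Rightarrow> 'a) \<Rightarrow> nat \<Rightarrow> nat" where
  "pal_complexity u n = card {w \<in> lang_n u n. is_palindrome w}"

definition T_fun :: "(nat \<Rightarrow> 'a) \<Rightarrow> nat \<Rightarrow> int" where
  "T_fun u n = int (factor_complexity u (Suc n)) - int (factor_complexity u n) + 2
              - int (pal_complexity u (Suc n)) - int (pal_complexity u n)"

definition list_factors :: "'a list \<Rightarrow> 'a list set" where
  "list_factors w = {take j (drop i w) | i j. True}"

definition defect_word :: "'a list \<Rightarrow> int" where
  "defect_word w = int (length w) + 1 - int (card {p \<in> list_factors w. is_palindrome p})"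

text \<open>Defect of an infinite word: supremum over prefixes, possibly infinite.
  Since every finite word has nonnegative defect, the supremum is taken in enat
  of the (nonnegative) prefix defects.\<close>
definition defect :: "(nat \<Rightarrow> 'a) \<Rightarrow> enat" where
  "defect u = (SUP n. enat (nat (defect_word (map u [0..<n]))))"

end

theory Submission
  imports Defs "HOL-Library.Sublist"
begin


lemma sublist_trans: "sublist x y \<Longrightarrow> sublist y z \<Longrightarrow> sublist x z"
  using sublist_order.order_trans by blast

lemma list_factors_sublist: "list_factors w = {x. sublist x w}"
proof (intro set_eqI iffI)
  fix x assume "x \<in> list_factors w"
  then obtain i j where "x = take j (drop i w)" by (auto simp: list_factors_def)
  then show "x \<in> {x. sublist x w}"
    using sublist_trans[OF sublist_take sublist_drop] by auto
next
  fix x assume "x \<in> {x. sublist x w}"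
  then obtain ps ss where "w = ps @ x @ ss" by (auto simp: sublist_def)
  then have "x = take (length x) (drop (length ps) w)" by simp
  then show "x \<in> list_factors w" by (auto simp: list_factors_def)
qed

definition Pal :: "'a list \<Rightarrow> 'a list set" where
  "Pal w = {p. sublist p w \<and> is_palindrome p}"

lemma finite_sublists: "finite {x. sublist x w}"
proof -
  have "{x. sublist x w} \<subseteq> {xs. set xs \<subseteq> set w \<and> length xs \<le> length w}"
    by (auto dest: set_mono_sublist sublist_length_le)
  then show ?thesis using finite_lists_length_le[of "set w" "length w"] finite_subset by auto
qed

lemma finite_Pal: "finite (Pal w)"
  unfolding Pal_def using finite_sublists[of w] by (rule rev_finite_subset) auto

lemma defect_Pal: "defect_word w = int (length w) + 1 - int (card (Pal w))"
  unfolding defect_word_def Pal_def list_factors_sublist by simp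

lemma pal_rev: "is_palindrome (rev p) = is_palindrome p"
  unfolding is_palindrome_def by auto

lemma Pal_rev: "Pal (rev w) = rev ` Pal w"
proof (intro set_eqI iffI)
  fix x assume "x \<in> Pal (rev w)"
  then have "rev x \<in> Pal w" by (auto simp: Pal_def sublist_rev_right pal_rev)
  then show "x \<in> rev ` Pal w" by (metis image_eqI rev_rev_ident)
next
  fix x assume "x \<in> rev ` Pal w"
  then show "x \<in> Pal (rev w)" by (auto simp: Pal_def pal_rev)
qed

lemma defect_rev: "defect_word (rev w) = defect_word w"
  unfolding defect_Pal Pal_rev by (simp add: card_image)

lemma suffix_pal_sublist:
  assumes "suffix p q" "p \<noteq> q" "is_palindrome q" "suffix q (v @ [a])" "is_palindrome p"
  shows "sublist p v"
proof -
  obtain r where q: "q = r @ p" using assms(1) by (auto simp: suffix_def)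
  with assms(2) have "r \<noteq> []" by auto
  have "q = rev q" using assms(3) by (simp add: is_palindrome_def)
  then have q2: "q = p @ rev r" using q assms(5) by (simp add: is_palindrome_def)
  obtain y where "v @ [a] = y @ q" using assms(4) by (auto simp: suffix_def)
  then have "v @ [a] = y @ p @ rev r" using q2 by simp
  then have "butlast (v @ [a]) = butlast (y @ p @ rev r)" by simp
  then have "v = y @ p @ butlast (rev r)" using \<open>r \<noteq> []\<close>
    by (simp add: butlast_append)
  then show ?thesis by (auto simp: sublist_def)
qed

lemma snoc_Pal:
  fixes v :: "'a list" and a :: 'a
  defines "S \<equiv> {p. is_palindrome p \<and> sublist p (v @ [a]) \<and> \<not> sublist p v}"
  shows "card (Pal (v @ [a])) = card (Pal v) + card S" and "card S \<le> 1"
    and "\<forall>p\<in>S. suffix p (v @ [a])"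
proof -
  have split: "Pal (v @ [a]) = Pal v \<union> S"
  proof (intro set_eqI iffI)
    fix x assume "x \<in> Pal (v @ [a])"
    then show "x \<in> Pal v \<union> S" unfolding S_def Pal_def by blast
  next
    fix x assume "x \<in> Pal v \<union> S"
    then show "x \<in> Pal (v @ [a])" unfolding S_def Pal_def
      using sublist_trans[of x v "v@[a]"] by blast
  qed
  have disj: "Pal v \<inter> S = {}" unfolding S_def Pal_def by blast
  have fS: "finite S" using finite_Pal[of "v@[a]"] split by (simp add: finite_subset)
  show "card (Pal (v @ [a])) = card (Pal v) + card S"
    using split disj fS finite_Pal[of v] by (simp add: card_Un_disjoint)
  have suf1: "suffix p (v @ [a])" if "p \<in> S" for p
  proof -
    have "sublist p (v @ [a])" "\<not> sublist p v" using that by (simp_all add: S_def)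
    then show ?thesis using sublist_snoc[of p v a] by simp
  qed
  then show suf: "\<forall>p\<in>S. suffix p (v @ [a])" by blast
  have "\<forall>p1\<in>S. \<forall>p2\<in>S. p1 = p2"
  proof (intro ballI)
    fix p1 p2 assume h: "p1 \<in> S" "p2 \<in> S"
    have h1: "is_palindrome p1" "\<not> sublist p1 v" "suffix p1 (v @ [a])"
      using h(1) suf1 by (simp_all add: S_def)
    have h2: "is_palindrome p2" "\<not> sublist p2 v" "suffix p2 (v @ [a])"
      using h(2) suf1 by (simp_all add: S_def)
    show "p1 = p2"
    proof (rule ccontr)
      assume ne: "p1 \<noteq> p2"
      from suffix_same_cases[OF h1(3) h2(3)]
      show False
      proof
        assume "suffix p1 p2"
        then have "sublist p1 v" using suffix_pal_sublist[of p1 p2 v a] ne h1 h2 by blast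
        then show False using h1 by blast
      next
        assume "suffix p2 p1"
        then have "sublist p2 v" using suffix_pal_sublist[of p2 p1 v a] ne h1 h2 by blast
        then show False using h2 by blast
      qed
    qed
  qed
  then show "card S \<le> 1" using card_le_Suc0_iff_eq[OF fS] by simp
qed

lemma defect_snoc_mono: "defect_word v \<le> defect_word (v @ [a])"
  using snoc_Pal[of v a] unfolding defect_Pal by simp

lemma defect_snoc_eq:
  assumes "defect_word (v @ [a]) = defect_word v"
  shows "\<exists>p. is_palindrome p \<and> suffix p (v @ [a]) \<and> \<not> sublist p v"
proof -
  let ?S = "{p. is_palindrome p \<and> sublist p (v @ [a]) \<and> \<not> sublist p v}"
  have "card ?S = 1" using assms snoc_Pal[of v a] unfolding defect_Pal by simp
  then obtain p where "p \<in> ?S" by (metis card_1_singletonE insertI1)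
  then show ?thesis using snoc_Pal(3)[of v a] by blast
qed

lemma defect_nonneg: "0 \<le> defect_word w"
proof (induction w rule: rev_induct)
  case Nil
  have "Pal ([]::'a list) = {[]}" by (auto simp: Pal_def is_palindrome_def)
  then show ?case by (simp add: defect_Pal)
next
  case (snoc x xs)
  then show ?case using defect_snoc_mono[of xs x] by linarith
qed

lemma defect_append_right: "defect_word v \<le> defect_word (v @ s)"
proof (induction s rule: rev_induct)
  case Nil then show ?case by simp
next
  case (snoc x xs)
  then show ?case using defect_snoc_mono[of "v @ xs" x] by simp
qed

lemma defect_append_left: "defect_word v \<le> defect_word (p @ v)"
proof -
  have "defect_word (rev v) \<le> defect_word (rev v @ rev p)" by (rule defect_append_right)
  then have "defect_word (rev v) \<le> defect_word (rev (p @ v))" by simp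
  then show ?thesis by (simp only: defect_rev)
qed

lemma defect_sublist: "sublist x y \<Longrightarrow> defect_word x \<le> defect_word y"
proof -
  assume "sublist x y"
  then obtain p s where y: "y = p @ x @ s" by (auto simp: sublist_def)
  have "defect_word x \<le> defect_word (x @ s)" by (rule defect_append_right)
  also have "\<dots> \<le> defect_word (p @ (x @ s))" by (rule defect_append_left)
  finally show ?thesis using y by simp
qed



definition pref :: "(nat \<Rightarrow> 'a) \<Rightarrow> nat \<Rightarrow> 'a list" where
  "pref u m = map u [0..<m]"

lemma occ_iff: "x = factor_of u i (length x) \<longleftrightarrow> (\<forall>k<length x. u (i + k) = x ! k)"
proof
  assume "x = factor_of u i (length x)"
  then show "\<forall>k<length x. u (i + k) = x ! k"
    by (metis factor_of_def add_diff_cancel_left' length_map length_upt nth_map_upt)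
next
  assume h: "\<forall>k<length x. u (i + k) = x ! k"
  show "x = factor_of u i (length x)"
    by (rule nth_equalityI) (auto simp: factor_of_def h)
qed

lemma pref_append: "m \<le> m' \<Longrightarrow> pref u m' = pref u m @ map u [m..<m']"
  unfolding pref_def using upt_add_eq_append[of 0 m "m' - m"] by simp

lemma pref_Suc: "pref u (Suc m) = pref u m @ [u m]"
  unfolding pref_def by simp

lemma pref_mono: "m \<le> m' \<Longrightarrow> sublist (pref u m) (pref u m')"
  using pref_append[of m m' u] by (metis sublist_append_rightI)

lemma factor_occ: "x = factor_of u i (length x) \<Longrightarrow> pref u (i + length x) = pref u i @ x"
  using pref_append[of i "i + length x" u] by (simp add: factor_of_def)

lemma lang_iff: "x \<in> lang u \<longleftrightarrow> (\<exists>m. sublist x (pref u m))"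
proof
  assume "x \<in> lang u"
  then obtain i where "x = factor_of u i (length x)" by (auto simp: lang_def)
  then have "pref u (i + length x) = pref u i @ x" by (rule factor_occ)
  then show "\<exists>m. sublist x (pref u m)" by (metis sublist_append_leftI)
next
  assume "\<exists>m. sublist x (pref u m)"
  then obtain m ps ss where h: "pref u m = ps @ x @ ss" by (auto simp: sublist_def)
  have len: "length ps + length x \<le> m" using arg_cong[OF h, of length] by (simp add: pref_def)
  have "\<forall>k<length x. u (length ps + k) = x ! k"
  proof (intro allI impI)
    fix k assume k: "k < length x"
    have "pref u m ! (length ps + k) = x ! k" using h k by (simp add: nth_append)
    moreover have "pref u m ! (length ps + k) = u (length ps + k)"
      using len k by (simp add: pref_def)
    ultimately show "u (length ps + k) = x ! k" by simp
  qed
  then have "x = factor_of u (length ps) (length x)" using occ_iff by blast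
  then show "x \<in> lang u" by (auto simp: lang_def)
qed

lemma lang_occ: "x \<in> lang u \<Longrightarrow> \<exists>i. \<forall>k<length x. u (i + k) = x ! k"
  unfolding lang_def using occ_iff by blast

lemma pref_in_lang: "pref u m \<in> lang u"
  using lang_iff by blast

lemma sublist_lang: "sublist x y \<Longrightarrow> y \<in> lang u \<Longrightarrow> x \<in> lang u"
  using lang_iff sublist_trans by metis

lemma recurrence:
  assumes cr: "closed_under_reversal u" and x: "x \<in> lang u"
  shows "\<exists>i\<ge>N. x = factor_of u i (length x)"
proof -
  have "rev x \<in> lang u" using cr x by (auto simp: closed_under_reversal_def)
  then obtain p where "\<forall>k<length (rev x). u (p + k) = rev x ! k" using lang_occ by blast
  then have hp: "\<forall>k<length x. u (p + k) = x ! (length x - Suc k)"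
    by (simp add: rev_nth)
  define M where "M = p + length x + N"
  have "rev (pref u M) \<in> lang u" using cr pref_in_lang by (auto simp: closed_under_reversal_def)
  then obtain j where "\<forall>k<length (rev (pref u M)). u (j + k) = rev (pref u M) ! k"
    using lang_occ by blast
  then have hj: "\<forall>k<M. u (j + k) = u (M - Suc k)"
    by (simp add: rev_nth pref_def)
  have "\<forall>k<length x. u (j + N + k) = x ! k"
  proof (intro allI impI)
    fix k assume k: "k < length x"
    have "u (j + N + k) = u (j + (N + k))" by (simp add: add.assoc)
    also have "\<dots> = u (M - Suc (N + k))" using hj k by (simp add: M_def)
    also have "M - Suc (N + k) = p + (length x - Suc k)" using k by (simp add: M_def)
    also have "u \<dots> = x ! (length x - Suc (length x - Suc k))"
      using hp[rule_format, of "length x - Suc k"] k by simp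
    also have "length x - Suc (length x - Suc k) = k" using k by simp
    finally show "u (j + N + k) = x ! k" .
  qed
  then show ?thesis using occ_iff by (metis le_add2)
qed

lemma finite_lang_n: "finite (lang_n u k :: ('a::finite) list set)"
proof -
  have "lang_n u k \<subseteq> {xs. set xs \<subseteq> UNIV \<and> length xs = k}" by (auto simp: lang_n_def)
  then show ?thesis using finite_lists_length_eq[of "UNIV::'a set" k] finite_subset by auto
qed

lemma cover_pref:
  assumes "finite S" "S \<subseteq> lang u"
  shows "\<exists>m. \<forall>x\<in>S. sublist x (pref u m)"
  using assms
proof (induction S rule: finite_induct)
  case empty then show ?case by simp
next
  case (insert y F)
  then obtain m where m: "\<forall>x\<in>F. sublist x (pref u m)" by auto
  obtain m2 where m2: "sublist y (pref u m2)" using insert.prems lang_iff by blast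
  have "\<forall>x\<in>insert y F. sublist x (pref u (max m m2))"
    using m m2 pref_mono[of m "max m m2" u] pref_mono[of m2 "max m m2" u] sublist_trans
    by (metis insert_iff max.cobounded1 max.cobounded2)
  then show ?case by blast
qed

lemma d_mono: "defect_word (pref u m) \<le> defect_word (pref u m')" if "m \<le> m'"
  using pref_mono[OF that] defect_sublist by blast

lemma defect_finite:
  assumes "defect u \<noteq> \<infinity>"
  shows "\<exists>N0. (\<forall>m. defect_word (pref u m) \<le> defect_word (pref u N0))
      \<and> int (the_enat (defect u)) = defect_word (pref u N0)"
proof -
  let ?d = "\<lambda>m. defect_word (pref u m)"
  obtain K where K: "defect u = enat K" using assms by (cases "defect u") auto
  have bnd: "nat (?d m) \<le> K" for m
  proof -
    have "enat (nat (?d m)) \<le> defect u" unfolding defect_def pref_def by (rule SUP_upper) simp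
    then show ?thesis using K by simp
  qed
  let ?R = "range (\<lambda>m. nat (?d m))"
  have sR: "?R \<subseteq> {..K}" using bnd by blast
  have fR: "finite ?R" using finite_subset[OF sR] by blast
  have "?R \<noteq> {}" by blast
  then have "Max ?R \<in> ?R" using Max_in[OF fR] by blast
  then obtain N0 where N0: "Max ?R = nat (?d N0)" by blast
  have le: "nat (?d m) \<le> nat (?d N0)" for m using Max_ge[OF fR, of "nat (?d m)"] N0 by simp
  have le2: "?d m \<le> ?d N0" for m
    using le[of m] defect_nonneg[of "pref u m"] defect_nonneg[of "pref u N0"] by simp
  have "defect u = enat (nat (?d N0))"
  proof (rule antisym)
    show "defect u \<le> enat (nat (?d N0))" unfolding defect_def pref_def
      using le unfolding pref_def by (intro SUP_least) simp
    show "enat (nat (?d N0)) \<le> defect u" unfolding defect_def pref_def by (rule SUP_upper) simp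
  qed
  then have "int (the_enat (defect u)) = ?d N0" using defect_nonneg[of "pref u N0"] by simp
  then show ?thesis using le2 by blast
qed

lemma pal_cover:
  assumes cr: "closed_under_reversal u" and df: "defect u \<noteq> \<infinity>" and x: "x \<in> lang u"
  shows "\<exists>z. is_palindrome z \<and> z \<in> lang u \<and> sublist x z"
proof -
  obtain N0 where N0: "\<forall>m. defect_word (pref u m) \<le> defect_word (pref u N0)"
    using defect_finite[OF df] by blast
  obtain i0 where o0: "x = factor_of u i0 (length x)" using x unfolding lang_def by blast
  obtain i1 where i1: "i1 \<ge> N0 + i0 + 1" and o1: "x = factor_of u i1 (length x)"
    using recurrence[OF cr x] by blast
  define m' where "m' = i1 + length x - 1"
  have M: "i1 + length x = Suc m'" using i1 by (simp add: m'_def)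
  have pS: "pref u (Suc m') = pref u m' @ [u m']" by (rule pref_Suc)
  have "defect_word (pref u (Suc m')) = defect_word (pref u m')"
  proof -
    have "defect_word (pref u N0) \<le> defect_word (pref u m')" using i1 d_mono[of N0 m' u]
      by (simp add: m'_def)
    moreover have "defect_word (pref u m') \<le> defect_word (pref u (Suc m'))" using d_mono[of m' "Suc m'" u] by simp
    ultimately show ?thesis using N0 by (meson order_antisym order_trans)
  qed
  then have "defect_word (pref u m' @ [u m']) = defect_word (pref u m')" using pS by simp
  from defect_snoc_eq[OF this] obtain p where
    p: "is_palindrome p" "suffix p (pref u (Suc m'))" "\<not> sublist p (pref u m')"
    using pS by auto
  have "pref u (Suc m') = pref u i1 @ x" using factor_occ[OF o1] M by simp
  then have xs: "suffix x (pref u (Suc m'))" unfolding suffix_def by blast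
  show ?thesis
  proof (cases "length p \<le> length x")
    case True
    then have "suffix p x" using suffix_length_suffix[OF p(2) xs] by simp
    then obtain q where "x = q @ p" unfolding suffix_def by blast
    then have "pref u (i0 + length x) = pref u i0 @ q @ p" using factor_occ[OF o0] by simp
    then have "sublist p (pref u (i0 + length x))" unfolding sublist_def by (metis append_Nil2 append_assoc)
    moreover have "i0 + length x \<le> m'" using i1 by (simp add: m'_def)
    ultimately have "sublist p (pref u m')" using pref_mono sublist_trans by metis
    then show ?thesis using p(3) by simp
  next
    case False
    then have "suffix x p" using suffix_length_suffix[OF xs p(2)] by simp
    moreover have "p \<in> lang u" using p(2) lang_iff by blast
    ultimately show ?thesis using p(1) by blast
  qed
qed



definition fl :: "'a list \<Rightarrow> nat \<Rightarrow> 'a list set" where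
  "fl z k = {x. sublist x z \<and> length x = k}"

definition Pc :: "'a list set \<Rightarrow> nat" where
  "Pc X = card {x\<in>X. is_palindrome x}"

definition TT :: "'a list set \<Rightarrow> 'a list set \<Rightarrow> int" where
  "TT X0 X1 = int (card X1) - int (card X0) + 2 - int (Pc X1) - int (Pc X0)"

definition cl :: "'a list \<Rightarrow> 'a list set" where
  "cl x = {x, rev x}"

lemma cl_rev[simp]: "cl (rev x) = cl x"
  unfolding cl_def by auto

lemma cl_mem: "y \<in> cl x \<Longrightarrow> cl y = cl x"
  unfolding cl_def by auto

lemma finite_fl: "finite (fl z k)"
  unfolding fl_def using finite_sublists[of z] by (rule rev_finite_subset) blast

lemma fl_occ: "x \<in> fl z k \<longleftrightarrow> (\<exists>i. i + k \<le> length z \<and> x = take k (drop i z))"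
proof
  assume "x \<in> fl z k"
  then obtain ps ss where h: "z = ps @ x @ ss" "length x = k" by (auto simp: fl_def sublist_def)
  then have "length ps + k \<le> length z \<and> x = take k (drop (length ps) z)" by simp
  then show "\<exists>i. i + k \<le> length z \<and> x = take k (drop i z)" by blast
next
  assume "\<exists>i. i + k \<le> length z \<and> x = take k (drop i z)"
  then obtain i where h: "i + k \<le> length z" "x = take k (drop i z)" by blast
  have "sublist x z" using h(2) sublist_trans[OF sublist_take sublist_drop] by blast
  moreover have "length x = k" using h by simp
  ultimately show "x \<in> fl z k" by (simp add: fl_def)
qed

lemma fl_rev: "is_palindrome z \<Longrightarrow> x \<in> fl z k \<Longrightarrow> rev x \<in> fl z k"
  unfolding fl_def is_palindrome_def using sublist_rev_left[of x z] by auto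

lemma count_classes:
  assumes fX: "finite X" and rX: "\<forall>x\<in>X. rev x \<in> X"
  shows "card X + Pc X = 2 * card (cl ` X)"
proof -
  define P where "P = {x\<in>X. is_palindrome x}"
  define N where "N = {x\<in>X. \<not> is_palindrome x}"
  have fP: "finite P" and fN: "finite N" using fX by (auto simp: P_def N_def)
  have X: "X = P \<union> N" "P \<inter> N = {}" by (auto simp: P_def N_def)
  have cX: "card X = card P + card N" using X fP fN by (simp add: card_Un_disjoint)
  have ci: "cl ` X = cl ` P \<union> cl ` N" using X by auto
  have cd: "cl ` P \<inter> cl ` N = {}"
  proof (rule ccontr)
    assume "cl ` P \<inter> cl ` N \<noteq> {}"
    then obtain p q where pq: "p \<in> P" "q \<in> N" "cl p = cl q" by blast
    then have "rev p = p" by (simp add: P_def is_palindrome_def)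
    then have "q = p" using pq(3) unfolding cl_def by auto
    then show False using pq by (simp add: P_def N_def)
  qed
  have "inj_on cl P"
  proof (rule inj_onI)
    fix p1 p2 assume h: "p1 \<in> P" "p2 \<in> P" "cl p1 = cl p2"
    then have "rev p2 = p2" by (simp add: P_def is_palindrome_def)
    then show "p1 = p2" using h(3) unfolding cl_def by auto
  qed
  then have cP: "card (cl ` P) = card P" by (rule card_image)
  have f1: "finite (cl ` N)" using fN by simp
  have f2: "finite (\<Union>(cl ` N))" using fN by (simp add: cl_def)
  have f3: "\<forall>c\<in>cl ` N. card c = 2"
    proof
      fix c assume "c \<in> cl ` N"
      then obtain x where "x \<in> N" "c = cl x" by blast
      then have "rev x \<noteq> x" "c = {x, rev x}" by (auto simp: N_def is_palindrome_def cl_def)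
      then show "card c = 2" by simp
    qed
  have f4: "\<forall>c1\<in>cl ` N. \<forall>c2\<in>cl ` N. c1 \<noteq> c2 \<longrightarrow> c1 \<inter> c2 = {}"
    proof (intro ballI impI)
      fix c1 c2 assume h: "c1 \<in> cl ` N" "c2 \<in> cl ` N" "c1 \<noteq> c2"
      show "c1 \<inter> c2 = {}"
      proof (rule ccontr)
        assume "c1 \<inter> c2 \<noteq> {}"
        then obtain y where "y \<in> c1" "y \<in> c2" by blast
        with h obtain x1 x2 where "c1 = cl x1" "c2 = cl x2" "y \<in> cl x1" "y \<in> cl x2" by blast
        then have "c1 = c2" using cl_mem by metis
        then show False using h by simp
      qed
    qed
  have cN: "2 * card (cl ` N) = card (\<Union>(cl ` N))"
    using card_partition[OF f1 f2] f3 f4 by blast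
  have UN: "\<Union>(cl ` N) = N"
  proof
    show "\<Union>(cl ` N) \<subseteq> N"
    proof
      fix y assume "y \<in> \<Union>(cl ` N)"
      then obtain x where x: "x \<in> N" "y = x \<or> y = rev x" by (auto simp: cl_def)
      then show "y \<in> N" using rX pal_rev[of x] by (auto simp: N_def)
    qed
    show "N \<subseteq> \<Union>(cl ` N)" by (auto simp: cl_def)
  qed
  have "card X + Pc X = card P + card N + card P" using cX by (simp add: Pc_def P_def)
  also have "\<dots> = 2 * card (cl ` P) + 2 * card (cl ` N)" using cP cN UN by simp
  also have "\<dots> = 2 * card (cl ` X)" using ci cd fP fN by (simp add: card_Un_disjoint)
  finally show ?thesis .
qed


definition ends :: "nat \<Rightarrow> 'a list \<Rightarrow> 'a list set set" where
  "ends n e = {cl (take n e), cl (drop 1 e)}"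

lemma ends_rev: "length e = Suc n \<Longrightarrow> ends n (rev e) = ends n e"
  unfolding ends_def by (auto simp: take_rev drop_rev)

lemma ends_pal: "length e = Suc n \<Longrightarrow> is_palindrome e \<Longrightarrow> cl (drop 1 e) = cl (take n e)"
proof -
  assume l: "length e = Suc n" and p: "is_palindrome e"
  have "drop 1 e = drop 1 (rev e)" using p by (simp add: is_palindrome_def)
  also have "\<dots> = rev (take n e)" using l by (simp add: drop_rev)
  finally show ?thesis by simp
qed

lemma core_ineq:
  assumes pz: "is_palindrome z"
    and B0: "B0 \<subseteq> fl z n" and B1: "B1 \<subseteq> fl z (Suc n)"
    and r1: "\<forall>x\<in>B1. rev x \<in> B1"
    and en: "\<forall>e\<in>B1. take n e \<in> B0 \<and> drop 1 e \<in> B0"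
    and st: "s \<le> t" and tz: "t + n \<le> length z"
    and win: "\<forall>i. s \<le> i \<and> i \<le> t \<longrightarrow> take n (drop i z) \<in> B0"
  shows "card (cl ` fl z n - cl ` B0)
     \<le> card (cl ` {e\<in>fl z (Suc n). \<not> is_palindrome e} - cl ` {e\<in>B1. \<not> is_palindrome e})"
proof -
  define A0 where "A0 = fl z n"
  define A1 where "A1 = fl z (Suc n)"
  define NA where "NA = {e\<in>A1. \<not> is_palindrome e}"
  define NB where "NB = {e\<in>B1. \<not> is_palindrome e}"
  define V where "V = cl ` A0"
  define W where "W = cl ` B0"
  define E where "E = cl ` NA"
  define EB where "EB = cl ` NB"
  define del :: "nat \<Rightarrow> nat" where "del i = (s - i) + (i - t)" for i
  define occ where "occ c i \<longleftrightarrow> i + n \<le> length z \<and> cl (take n (drop i z)) = c" for c i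
  define dd where "dd c = (LEAST k. \<exists>i. occ c i \<and> del i = k)" for c
  define Q where "Q c \<epsilon> \<longleftrightarrow> (\<exists>e c'. \<epsilon> = cl e \<and> e \<in> NA \<and> e \<notin> B1 \<and> ends n e = {c, c'} \<and> dd c' < dd c)"
    for c \<epsilon>
  have dd_le: "dd c \<le> del i" if "occ c i" for c i
    unfolding dd_def using that by (intro Least_le) blast
  have common: "\<exists>\<epsilon>. Q c \<epsilon>" if c: "c \<in> V - W" and e: "e \<in> A1" and ee: "ends n e = {c, c'}"
    and lt: "dd c' < dd c" for c e c'
  proof -
    have le: "length e = Suc n" using e by (simp add: A1_def fl_def)
    have "e \<notin> B1"
    proof
      assume "e \<in> B1"
      then have "take n e \<in> B0" "drop 1 e \<in> B0" using en by auto
      moreover have "c \<in> ends n e" using ee by simp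
      ultimately have "c \<in> W" unfolding ends_def W_def by auto
      then show False using c by simp
    qed
    moreover have "\<not> is_palindrome e"
    proof
      assume "is_palindrome e"
      then have "ends n e = {cl (take n e)}" using ends_pal[OF le] by (simp add: ends_def)
      moreover have "c \<in> ends n e" "c' \<in> ends n e" using ee by auto
      ultimately have "c = c'" by simp
      then show False using lt by simp
    qed
    ultimately show ?thesis using e ee lt unfolding Q_def NA_def by blast
  qed
  have exQ: "\<exists>\<epsilon>. Q c \<epsilon>" if c: "c \<in> V - W" for c
  proof -
    obtain x where x: "x \<in> A0" "c = cl x" using c by (auto simp: V_def)
    then obtain i where "i + n \<le> length z" "x = take n (drop i z)"
      using fl_occ[of x z n] unfolding A0_def by blast
    then have "occ c i" using x by (simp add: occ_def)
    then have "\<exists>k i. occ c i \<and> del i = k" by blast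
    then have "\<exists>i. occ c i \<and> del i = dd c" unfolding dd_def by (rule LeastI_ex)
    then obtain i where oi: "occ c i" and di: "del i = dd c" by blast
    have nw: "\<not> (s \<le> i \<and> i \<le> t)"
    proof
      assume "s \<le> i \<and> i \<le> t"
      then have "take n (drop i z) \<in> B0" using win by blast
      then have "c \<in> W" using oi by (auto simp: occ_def W_def)
      then show False using c by simp
    qed
    show ?thesis
    proof (cases "i < s")
      case True
      define e where "e = take (Suc n) (drop i z)"
      have iz: "Suc i + n \<le> length z" using True st tz by simp
      have e1: "e \<in> A1" unfolding A1_def e_def using iz fl_occ by fastforce
      have t1: "take n e = take n (drop i z)" by (simp add: e_def)
      have t2: "drop 1 e = take n (drop (Suc i) z)" by (simp add: e_def drop_take)
      define c' where "c' = cl (take n (drop (Suc i) z))"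
      have "occ c' (Suc i)" using iz by (simp add: occ_def c'_def)
      then have "dd c' \<le> del (Suc i)" by (rule dd_le)
      moreover have "del (Suc i) < del i" using True st by (simp add: del_def)
      ultimately have lt: "dd c' < dd c" using di by simp
      have "ends n e = {c, c'}" using oi t1 t2 by (simp add: ends_def occ_def c'_def)
      then show ?thesis using common[OF c e1 _ lt] by blast
    next
      case False
      then have it: "t < i" using nw by simp
      define e where "e = take (Suc n) (drop (i - 1) z)"
      have iz: "i - 1 + Suc n \<le> length z" using oi it by (simp add: occ_def)
      have e1: "e \<in> A1" unfolding A1_def e_def using iz fl_occ by fastforce
      have t1: "take n e = take n (drop (i - 1) z)" by (simp add: e_def)
      have "drop 1 e = take n (drop 1 (drop (i - 1) z))" by (simp add: e_def drop_take)
      also have "drop 1 (drop (i - 1) z) = drop i z" using it by simp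
      finally have t2: "drop 1 e = take n (drop i z)" .
      define c' where "c' = cl (take n (drop (i - 1) z))"
      have "occ c' (i - 1)" using iz by (simp add: occ_def c'_def)
      then have "dd c' \<le> del (i - 1)" by (rule dd_le)
      moreover have "del (i - 1) < del i" using it st by (simp add: del_def)
      ultimately have lt: "dd c' < dd c" using di by simp
      have "ends n e = {c, c'}" using oi t1 t2 by (auto simp: ends_def occ_def c'_def)
      then show ?thesis using common[OF c e1 _ lt] by blast
    qed
  qed
  define \<phi> where "\<phi> c = (SOME \<epsilon>. Q c \<epsilon>)" for c
  have Qphi: "Q c (\<phi> c)" if "c \<in> V - W" for c
    unfolding \<phi>_def using exQ[OF that] by (rule someI_ex)
  have img: "\<phi> ` (V - W) \<subseteq> E - EB"
  proof
    fix \<epsilon> assume "\<epsilon> \<in> \<phi> ` (V - W)"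
    then obtain c where c: "c \<in> V - W" "\<epsilon> = \<phi> c" by blast
    then obtain e c' where q: "\<epsilon> = cl e" "e \<in> NA" "e \<notin> B1"
      using Qphi[OF c(1)] unfolding Q_def by blast
    have "\<epsilon> \<in> E" using q by (simp add: E_def)
    moreover have "\<epsilon> \<notin> EB"
    proof
      assume "\<epsilon> \<in> EB"
      then obtain e2 where e2: "e2 \<in> NB" "cl e = cl e2" using q by (auto simp: EB_def)
      then have "e = e2 \<or> e = rev e2" unfolding cl_def by auto
      then have "e \<in> B1" using e2 r1 by (auto simp: NB_def)
      then show False using q by simp
    qed
    ultimately show "\<epsilon> \<in> E - EB" by simp
  qed
  have inj: "inj_on \<phi> (V - W)"
  proof (rule inj_onI)
    fix c1 c2 assume c1: "c1 \<in> V - W" and c2: "c2 \<in> V - W" and eq: "\<phi> c1 = \<phi> c2"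
    obtain e1 c1' where q1: "\<phi> c1 = cl e1" "e1 \<in> NA" "ends n e1 = {c1, c1'}" "dd c1' < dd c1"
      using Qphi[OF c1] unfolding Q_def by blast
    obtain e2 c2' where q2: "\<phi> c2 = cl e2" "e2 \<in> NA" "ends n e2 = {c2, c2'}" "dd c2' < dd c2"
      using Qphi[OF c2] unfolding Q_def by blast
    have l1: "length e1 = Suc n" using q1 by (simp add: NA_def A1_def fl_def)
    have "e2 = e1 \<or> e2 = rev e1" using eq q1 q2 unfolding cl_def by auto
    then have "ends n e2 = ends n e1" using ends_rev[OF l1] by auto
    then have S: "{c1, c1'} = {c2, c2'}" using q1 q2 by simp
    show "c1 = c2"
    proof (rule ccontr)
      assume ne: "c1 \<noteq> c2"
      then have "c1 = c2'" "c2 = c1'" using S by (auto simp: doubleton_eq_iff)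
      then show False using q1(4) q2(4) by simp
    qed
  qed
  have fE: "finite (E - EB)" using finite_fl[of z "Suc n"] by (simp add: E_def NA_def A1_def)
  have "card (V - W) \<le> card (E - EB)" using card_inj_on_le[OF inj img fE] .
  then show ?thesis by (simp add: V_def W_def E_def EB_def A0_def A1_def NA_def NB_def)
qed


lemma card_split_pal:
  assumes "finite X"
  shows "card X = card {x\<in>X. \<not> is_palindrome x} + card {x\<in>X. is_palindrome x}"
proof -
  have e: "X = {x\<in>X. \<not> is_palindrome x} \<union> {x\<in>X. is_palindrome x}" by blast
  have "card ({x\<in>X. \<not> is_palindrome x} \<union> {x\<in>X. is_palindrome x})
     = card {x\<in>X. \<not> is_palindrome x} + card {x\<in>X. is_palindrome x}"
    by (rule card_Un_disjoint) (use assms in auto)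
  then show ?thesis using e by simp
qed

lemma graph_ineq:
  assumes pz: "is_palindrome z"
    and B0: "B0 \<subseteq> fl z n" and B1: "B1 \<subseteq> fl z (Suc n)"
    and r0: "\<forall>x\<in>B0. rev x \<in> B0" and r1: "\<forall>x\<in>B1. rev x \<in> B1"
    and en: "\<forall>e\<in>B1. take n e \<in> B0 \<and> drop 1 e \<in> B0"
    and st: "s \<le> t" and tz: "t + n \<le> length z"
    and win: "\<forall>i. s \<le> i \<and> i \<le> t \<longrightarrow> take n (drop i z) \<in> B0"
  shows "TT B0 B1 \<le> TT (fl z n) (fl z (Suc n))"
proof -
  define A0 where "A0 = fl z n"
  define A1 where "A1 = fl z (Suc n)"
  define NA where "NA = {e\<in>A1. \<not> is_palindrome e}"
  define NB where "NB = {e\<in>B1. \<not> is_palindrome e}"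
  have fA0: "finite A0" and fA1: "finite A1" by (simp_all add: A0_def A1_def finite_fl)
  have fB0: "finite B0" using B0 finite_fl finite_subset by blast
  have fB1: "finite B1" using B1 finite_fl finite_subset by blast
  have fNA: "finite NA" using fA1 by (simp add: NA_def)
  have fNB: "finite NB" using fB1 by (simp add: NB_def)
  have rA0: "\<forall>x\<in>A0. rev x \<in> A0" using fl_rev[OF pz] by (simp add: A0_def)
  have rNA: "\<forall>x\<in>NA. rev x \<in> NA" using fl_rev[OF pz] by (simp add: NA_def A1_def pal_rev)
  have rNB: "\<forall>x\<in>NB. rev x \<in> NB" using r1 by (simp add: NB_def pal_rev)
  have P0: "Pc NA = 0" "Pc NB = 0" by (simp_all add: Pc_def NA_def NB_def)
  have c1: "card A0 + Pc A0 = 2 * card (cl ` A0)" by (rule count_classes[OF fA0 rA0])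
  have c2: "card B0 + Pc B0 = 2 * card (cl ` B0)" by (rule count_classes[OF fB0 r0])
  have c3: "card NA = 2 * card (cl ` NA)" using count_classes[OF fNA rNA] P0 by simp
  have c4: "card NB = 2 * card (cl ` NB)" using count_classes[OF fNB rNB] P0 by simp
  have sA: "card A1 = card NA + Pc A1" unfolding NA_def Pc_def by (rule card_split_pal[OF fA1])
  have sB: "card B1 = card NB + Pc B1" unfolding NB_def Pc_def by (rule card_split_pal[OF fB1])
  have WV: "cl ` B0 \<subseteq> cl ` A0" using B0 by (auto simp: A0_def)
  have EE: "cl ` NB \<subseteq> cl ` NA" using B1 by (auto simp: NA_def NB_def A1_def)
  have core: "card (cl ` A0 - cl ` B0) \<le> card (cl ` NA - cl ` NB)"
    using core_ineq[OF pz B0 B1 r1 en st tz win] by (simp add: A0_def A1_def NA_def NB_def)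
  have d1: "card (cl ` A0 - cl ` B0) = card (cl ` A0) - card (cl ` B0)"
    using WV fA0 by (simp add: card_Diff_subset finite_subset)
  have d2: "card (cl ` NA - cl ` NB) = card (cl ` NA) - card (cl ` NB)"
    using EE fNA by (simp add: card_Diff_subset finite_subset)
  have l1: "card (cl ` B0) \<le> card (cl ` A0)" using WV fA0 by (simp add: card_mono)
  have l2: "card (cl ` NB) \<le> card (cl ` NA)" using EE fNA by (simp add: card_mono)
  have "int (card (cl ` A0)) - int (card (cl ` B0)) \<le> int (card (cl ` NA)) - int (card (cl ` NB))"
    using core d1 d2 l1 l2 by linarith
  then show ?thesis unfolding TT_def A0_def[symmetric] A1_def[symmetric]
    using c1 c2 c3 c4 sA sB by linarith
qed

lemma T_nonneg:
  assumes pw: "is_palindrome w" and n: "n \<le> length w"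
  shows "0 \<le> TT (fl w n) (fl w (Suc n))"
proof -
  define x where "x = take n w"
  have x1: "x \<in> fl w n" using n by (simp add: x_def fl_def)
  have x2: "rev x \<in> fl w n" using fl_rev[OF pw x1] .
  have "TT {x, rev x} {} \<le> TT (fl w n) (fl w (Suc n))"
    by (rule graph_ineq[OF pw, where s=0 and t=0]) (use x1 x2 n in \<open>auto simp: x_def\<close>)
  moreover have "TT {x, rev x} {} = 0"
  proof (cases "rev x = x")
    case True
    then have "{xa \<in> {x, rev x}. is_palindrome xa} = {x}" by (auto simp: is_palindrome_def)
    then show ?thesis using True by (simp add: TT_def Pc_def)
  next
    case False
    then have "{xa \<in> {x, rev x}. is_palindrome xa} = {}" by (auto simp: is_palindrome_def)
    then show ?thesis using False by (simp add: TT_def Pc_def)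
  qed
  ultimately show ?thesis by simp
qed

lemma T_mono:
  assumes pw: "is_palindrome w" and pz: "is_palindrome z" and wz: "sublist w z"
    and n: "n \<le> length w"
  shows "TT (fl w n) (fl w (Suc n)) \<le> TT (fl z n) (fl z (Suc n))"
proof -
  obtain p q where z: "z = p @ w @ q" using wz by (auto simp: sublist_def)
  show ?thesis
  proof (rule graph_ineq[OF pz])
    show "fl w n \<subseteq> fl z n" "fl w (Suc n) \<subseteq> fl z (Suc n)"
      using wz sublist_trans by (auto simp: fl_def)
    show "\<forall>x\<in>fl w n. rev x \<in> fl w n" "\<forall>x\<in>fl w (Suc n). rev x \<in> fl w (Suc n)"
      using fl_rev[OF pw] by auto
    show "\<forall>e\<in>fl w (Suc n). take n e \<in> fl w n \<and> drop 1 e \<in> fl w n"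
      using sublist_trans[OF sublist_take] sublist_trans[OF sublist_drop] by (auto simp: fl_def)
    show "length p \<le> length p + length w - n" using n by simp
    show "length p + length w - n + n \<le> length z" using n z by simp
    show "\<forall>i. length p \<le> i \<and> i \<le> length p + length w - n \<longrightarrow> take n (drop i z) \<in> fl w n"
    proof (intro allI impI)
      fix i assume i: "length p \<le> i \<and> i \<le> length p + length w - n"
      define j where "j = i - length p"
      have ij: "i = length p + j" "j + n \<le> length w" using i n unfolding j_def by linarith+
      have "drop i z = drop j w @ q" using ij z by simp
      then have "take n (drop i z) = take n (drop j w)" using ij by simp
      moreover have "(i - length p) + n \<le> length w" using ij by simp
      ultimately show "take n (drop i z) \<in> fl w n" using fl_occ j_def by metis
    qed
  qed
qed



lemma fl_full: "fl w (length w) = {w}"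
proof
  show "fl w (length w) \<subseteq> {w}"
  proof
    fix x assume "x \<in> fl w (length w)"
    then obtain ps ss where "w = ps @ x @ ss" "length x = length w" by (auto simp: fl_def sublist_def)
    then show "x \<in> {w}" by simp
  qed
  show "{w} \<subseteq> fl w (length w)" by (simp add: fl_def)
qed

lemma fl_zero: "fl w 0 = {[]}"
  by (auto simp: fl_def)

lemma Pal_card_sum: "int (card (Pal w)) = (\<Sum>n<Suc (length w). int (Pc (fl w n)))"
proof -
  have e: "Pal w = (\<Union>n\<in>{..<Suc (length w)}. {x\<in>fl w n. is_palindrome x})"
    by (auto simp: Pal_def fl_def less_Suc_eq_le dest: sublist_length_le)
  have "card (\<Union>n\<in>{..<Suc (length w)}. {x\<in>fl w n. is_palindrome x})
      = (\<Sum>n<Suc (length w). card {x\<in>fl w n. is_palindrome x})"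
    apply (rule card_UN_disjoint)
      apply simp
     apply (simp add: finite_fl)
    apply (auto simp: fl_def)
    done
  then show ?thesis using e by (simp add: Pc_def)
qed

lemma T_sum:
  assumes pw: "is_palindrome w"
  shows "(\<Sum>n<length w. TT (fl w n) (fl w (Suc n))) = 2 * defect_word w"
proof -
  define L where "L = length w"
  define C where "C n = int (card (fl w n))" for n
  define P where "P n = int (Pc (fl w n))" for n
  have h: "TT (fl w n) (fl w (Suc n)) = (C (Suc n) - C n) + 2 - (P (Suc n) + P n)" for n
    by (simp add: TT_def C_def P_def)
  have "(\<Sum>n<L. TT (fl w n) (fl w (Suc n)))
      = (\<Sum>n<L. C (Suc n) - C n) + (\<Sum>n<L. 2) - ((\<Sum>n<L. P (Suc n)) + (\<Sum>n<L. P n))"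
    unfolding h by (simp add: sum_subtractf sum.distrib)
  also have "(\<Sum>n<L. C (Suc n) - C n) = C L - C 0" by (rule sum_lessThan_telescope)
  also have "C L = 1" by (simp add: C_def L_def fl_full)
  also have "C 0 = 1" by (simp add: C_def fl_zero)
  also have "(\<Sum>n<L. (2::int)) = 2 * int L" by simp
  finally have s1: "(\<Sum>n<L. TT (fl w n) (fl w (Suc n)))
      = 2 * int L - ((\<Sum>n<L. P (Suc n)) + (\<Sum>n<L. P n))" by simp
  have Q: "(\<Sum>n<Suc L. P n) = int (card (Pal w))" using Pal_card_sum[of w] by (simp add: P_def L_def)
  have a1: "(\<Sum>n<Suc L. P n) = P 0 + (\<Sum>n<L. P (Suc n))" by (rule sum.lessThan_Suc_shift)
  have a2: "(\<Sum>n<Suc L. P n) = (\<Sum>n<L. P n) + P L" by simp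
  have p0: "P 0 = 1"
  proof -
    have "{x \<in> fl w 0. is_palindrome x} = {[]}" by (auto simp: is_palindrome_def fl_zero)
    then have "P 0 = int (card {[]::'a list})" by (simp only: P_def Pc_def)
    then show ?thesis by simp
  qed
  have pL: "P L = 1"
  proof -
    have "{x \<in> {w}. is_palindrome x} = {w}" using pw by auto
    then show ?thesis by (simp add: P_def L_def fl_full Pc_def)
  qed
  have "(\<Sum>n<L. TT (fl w n) (fl w (Suc n))) = 2 * (int L + 1 - int (card (Pal w)))"
    using s1 Q a1 a2 p0 pL by (smt (verit))
  then show ?thesis by (simp add: defect_Pal L_def)
qed


lemma fl_eq_lang_n:
  assumes z: "z \<in> lang u" and S: "\<forall>x\<in>lang_n u k. sublist x z"
  shows "fl z k = lang_n u k"
proof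
  show "fl z k \<subseteq> lang_n u k" using z sublist_lang by (auto simp: fl_def lang_n_def)
  show "lang_n u k \<subseteq> fl z k" using S by (auto simp: fl_def lang_n_def)
qed

lemma T_fun_TT:
  assumes z: "z \<in> lang u" and S0: "\<forall>x\<in>lang_n u n. sublist x z"
    and S1: "\<forall>x\<in>lang_n u (Suc n). sublist x z"
  shows "T_fun u n = TT (fl z n) (fl z (Suc n))"
  using fl_eq_lang_n[OF z S0] fl_eq_lang_n[OF z S1]
  by (simp add: T_fun_def TT_def factor_complexity_def pal_complexity_def Pc_def)

lemma lang_n_witness: "factor_of u 0 k \<in> lang_n u k"
proof -
  have "factor_of u 0 k \<in> lang u" unfolding lang_def
    by (rule CollectI, rule exI[of _ 0]) (simp add: factor_of_def)
  then show ?thesis unfolding lang_n_def by (simp add: factor_of_def)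
qed

theorem theorem1:
  fixes u :: "nat \<Rightarrow> 'a::finite"
  assumes "closed_under_reversal u"
    and "defect u \<noteq> \<infinity>"
    and "summable (\<lambda>n. real_of_int (T_fun u n))"
  shows "2 * real (the_enat (defect u)) = (\<Sum>n. real_of_int (T_fun u n))"
proof -
  note cr = assms(1) and df = assms(2) and sm = assms(3)
  obtain N0 where N0: "\<forall>m. defect_word (pref u m) \<le> defect_word (pref u N0)"
    and DN: "int (the_enat (defect u)) = defect_word (pref u N0)"
    using defect_finite[OF df] by blast
  define D where "D = the_enat (defect u)"
  have defz: "defect_word z \<le> int D" if zl: "z \<in> lang u" for z
  proof -
    obtain m where "sublist z (pref u m)" using zl lang_iff[of z u] by blast
    then have "defect_word z \<le> defect_word (pref u m)" by (rule defect_sublist)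
    moreover have "defect_word (pref u m) \<le> defect_word (pref u N0)" using N0 by blast
    ultimately show ?thesis using DN unfolding D_def by linarith
  qed
  have cover: "\<exists>z. is_palindrome z \<and> z \<in> lang u \<and> (\<forall>x\<in>S. sublist x z)"
    if fS: "finite S" "S \<subseteq> lang u" for S
  proof -
    obtain m where m: "\<forall>x\<in>S. sublist x (pref u m)" using cover_pref[OF fS] by blast
    obtain z where z: "is_palindrome z" "z \<in> lang u" "sublist (pref u m) z"
      using pal_cover[OF cr df pref_in_lang] by blast
    have "\<forall>x\<in>S. sublist x z" using m z(3) sublist_trans[of _ "pref u m" z] by blast
    then show ?thesis using z by blast
  qed
  have ln_lang: "lang_n u k \<subseteq> lang u" for k by (auto simp: lang_n_def)
  have cover2: "\<exists>z. is_palindrome z \<and> z \<in> lang u \<and> (\<forall>x\<in>lang_n u n. sublist x z)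
      \<and> (\<forall>x\<in>lang_n u (Suc n). sublist x z) \<and> sublist y z \<and> Suc n \<le> length z"
    if "y \<in> lang u" for n y
  proof -
    have "finite (insert y (lang_n u n \<union> lang_n u (Suc n)))" by (simp add: finite_lang_n)
    moreover have "insert y (lang_n u n \<union> lang_n u (Suc n)) \<subseteq> lang u" using ln_lang that by blast
    ultimately obtain z where z: "is_palindrome z" "z \<in> lang u"
      "\<forall>x\<in>insert y (lang_n u n \<union> lang_n u (Suc n)). sublist x z" using cover by blast
    have "sublist (factor_of u 0 (Suc n)) z" using z(3) lang_n_witness by blast
    then have "length (factor_of u 0 (Suc n)) \<le> length z" by (rule sublist_length_le)
    then have "Suc n \<le> length z" by (simp add: factor_of_def)
    then show ?thesis using z by blast
  qed
  have nonneg: "0 \<le> T_fun u n" for n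
  proof -
    obtain z where z: "is_palindrome z" "z \<in> lang u" "\<forall>x\<in>lang_n u n. sublist x z"
      "\<forall>x\<in>lang_n u (Suc n). sublist x z" "Suc n \<le> length z"
      using cover2[OF pref_in_lang[of u 0]] by blast
    have "T_fun u n = TT (fl z n) (fl z (Suc n))" using T_fun_TT[OF z(2) z(3) z(4)] .
    moreover have "0 \<le> TT (fl z n) (fl z (Suc n))" using T_nonneg[OF z(1)] z(5) by simp
    ultimately show ?thesis by simp
  qed
  have upper: "(\<Sum>n<K. T_fun u n) \<le> 2 * int D" for K
  proof -
    define S where "S = (\<Union>k\<in>{..K}. lang_n u k)"
    have "finite S" by (simp add: S_def finite_lang_n)
    moreover have "S \<subseteq> lang u" using ln_lang by (auto simp: S_def)
    ultimately obtain z where z: "is_palindrome z" "z \<in> lang u" "\<forall>x\<in>S. sublist x z"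
      using cover by blast
    have "factor_of u 0 K \<in> S" using lang_n_witness by (auto simp: S_def)
    then have "sublist (factor_of u 0 K) z" using z(3) by blast
    then have "length (factor_of u 0 K) \<le> length z" by (rule sublist_length_le)
    then have KL: "K \<le> length z" by (simp add: factor_of_def)
    have "T_fun u n = TT (fl z n) (fl z (Suc n))" if "n < K" for n
    proof -
      have "n \<in> {..K}" "Suc n \<in> {..K}" using that by auto
      then have "lang_n u n \<subseteq> S" "lang_n u (Suc n) \<subseteq> S" unfolding S_def by blast+
      then have "\<forall>x\<in>lang_n u n. sublist x z" "\<forall>x\<in>lang_n u (Suc n). sublist x z"
        using z(3) by blast+
      then show ?thesis using T_fun_TT[OF z(2)] by blast
    qed
    then have "(\<Sum>n<K. T_fun u n) = (\<Sum>n<K. TT (fl z n) (fl z (Suc n)))" by simp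
    also have "\<dots> \<le> (\<Sum>n<length z. TT (fl z n) (fl z (Suc n)))"
      by (rule sum_mono2) (use KL T_nonneg[OF z(1)] in auto)
    also have "\<dots> = 2 * defect_word z" using T_sum[OF z(1)] .
    also have "\<dots> \<le> 2 * int D" using defz[OF z(2)] by simp
    finally show ?thesis .
  qed
  obtain L where lower: "2 * int D \<le> (\<Sum>n<L. T_fun u n)"
  proof -
    obtain z0 where z0: "is_palindrome z0" "z0 \<in> lang u" "sublist (pref u N0) z0"
      using pal_cover[OF cr df pref_in_lang] by blast
    have "defect_word (pref u N0) \<le> defect_word z0" using z0(3) by (rule defect_sublist)
    then have "defect_word z0 = int D" using defz[OF z0(2)] DN by (simp add: D_def)
    then have "2 * int D = (\<Sum>n<length z0. TT (fl z0 n) (fl z0 (Suc n)))" using T_sum[OF z0(1)] by simp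
    also have "\<dots> \<le> (\<Sum>n<length z0. T_fun u n)"
    proof (rule sum_mono)
      fix n assume n: "n \<in> {..<length z0}"
      obtain z where z: "is_palindrome z" "z \<in> lang u" "\<forall>x\<in>lang_n u n. sublist x z"
        "\<forall>x\<in>lang_n u (Suc n). sublist x z" "sublist z0 z"
        using cover2[OF z0(2)] by blast
      have "TT (fl z0 n) (fl z0 (Suc n)) \<le> TT (fl z n) (fl z (Suc n))"
        using T_mono[OF z0(1) z(1) z(5)] n by simp
      also have "\<dots> = T_fun u n" using T_fun_TT[OF z(2) z(3) z(4)] by simp
      finally show "TT (fl z0 n) (fl z0 (Suc n)) \<le> T_fun u n" .
    qed
    finally show ?thesis using that by blast
  qed
  have r1: "(\<Sum>n. real_of_int (T_fun u n)) \<le> 2 * real D"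
  proof (rule suminf_le_const[OF sm])
    fix K
    have "(\<Sum>n<K. real_of_int (T_fun u n)) = real_of_int (\<Sum>n<K. T_fun u n)" by simp
    also have "\<dots> \<le> real_of_int (2 * int D)" using upper[of K] by linarith
    finally show "(\<Sum>n<K. real_of_int (T_fun u n)) \<le> 2 * real D" by simp
  qed
  have "2 * real D = real_of_int (2 * int D)" by simp
  also have "\<dots> \<le> real_of_int (\<Sum>n<L. T_fun u n)" using lower by linarith
  also have "\<dots> = (\<Sum>n<L. real_of_int (T_fun u n))" by simp
  also have "\<dots> \<le> (\<Sum>n. real_of_int (T_fun u n))"
    by (rule sum_le_suminf[OF sm]) (use nonneg in auto)
  finally have r2: "2 * real D \<le> (\<Sum>n. real_of_int (T_fun u n))" .
  show ?thesis using r1 r2 by (simp add: D_def)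
qed


end
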